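(* Let $r\ge1$ and $f\in H^{r+p(r)}(\mathbb T)$. Then for all $\tau>0$, $$\|P_1^\tau(f)\|_r\le C\tau^2\|f\|_{r+p(r)}^2,$$ with $C$ independent of $\tau$ and $f$, where $$P_1^\tau(f)=\sum_{k\neq0}\sum_{k_1+k_2=k}\frac{k_1^2}{k^2}\int_0^\tau\big(e^{-2isk_2^2}-1\big)\big(e^{-2iskk_1}-1\big)ds\,\widehat{\bar f}_{k_1}\widehat{\bar f}_{k_2}e^{ikx}.$$
   Context: $\mathbb{T}=[-\pi,\pi]$ periodic; $\widehat f_k=\frac1{2\pi}\int_{\mathbb T}f(x)e^{-ikx}dx$; $\|f\|_s^2=\sum_k(1+k^2)^s|\widehat f_k|^2$ is the $H^s$ norm; $\bar f$ is the complex conjugate. The function $p$ on $[1,\infty)$: $p(1)=1$; $p(r)=(3-2r)+$ for $1<r\le7/6$; $p(r)=2/3$ for $7/6<r\le17/12$; $p(r)=(7/2-2r)+$ for $17/12<r\le3/2$; $p(r)=5/4-r/2$ for $3/2<r<5/2$; $p(5/2)=0+$; $p(r)=0$ for $r>5/2$. Here $c+$ means: the statement holds with $c+\varepsilon$ in place of $p(r)$ for every sufficiently small $\varepsilon>0$ (the constant may then depend on $\varepsilon$). *)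

theory Defs
  imports "HOL-Analysis.Analysis"
begin

definition fourier_coeff :: "(real \<Rightarrow> complex) \<Rightarrow> int \<Rightarrow> complex" where
  "fourier_coeff f k =
     complex_of_real (1 / (2 * pi)) *
       (LINT x:{-pi..pi}|lborel. f x * exp (- \<i> * of_int k * complex_of_real x))"

definition sob_sq :: "real \<Rightarrow> (int \<Rightarrow> complex) \<Rightarrow> real" where
  "sob_sq s c = (\<Sum>\<^sub>\<infinity>k\<in>(UNIV::int set). (1 + (of_int k)^2) powr s * (cmod (c k))^2)"

definition in_H :: "real \<Rightarrow> (int \<Rightarrow> complex) \<Rightarrow> bool" where
  "in_H s c \<longleftrightarrow> (\<lambda>k. (1 + (of_int k)^2) powr s * (cmod (c k))^2) summable_on (UNIV::int set)"

definition sob_norm :: "real \<Rightarrow> (int \<Rightarrow> complex) \<Rightarrow> real" where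
  "sob_norm s c = sqrt (sob_sq s c)"

text \<open>The k-th Fourier coefficient of P_1^tau(f), where g = the Fourier
  coefficients of conj f.\<close>
definition P1_coeff :: "real \<Rightarrow> (int \<Rightarrow> complex) \<Rightarrow> int \<Rightarrow> complex" where
  "P1_coeff \<tau> g k =
    (if k = 0 then 0 else
      (\<Sum>\<^sub>\<infinity>k1\<in>(UNIV::int set).
         complex_of_real ((of_int k1)^2 / (of_int k)^2) *
         integral {0..\<tau>} (\<lambda>s::real.
            (exp (- 2 * \<i> * complex_of_real s * of_int ((k - k1)^2)) - 1) *
            (exp (- 2 * \<i> * complex_of_real s * of_int (k * k1)) - 1)) *
         g k1 * g (k - k1)))"

text \<open>The exponent p(r) without the "+" and the flag telling whether it carries a "+".\<close>
definition p_base :: "real \<Rightarrow> real" where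
  "p_base r =
    (if r = 1 then 1
     else if 1 < r \<and> r \<le> 7/6 then 3 - 2*r
     else if 7/6 < r \<and> r \<le> 17/12 then 2/3
     else if 17/12 < r \<and> r \<le> 3/2 then 7/2 - 2*r
     else if 3/2 < r \<and> r < 5/2 then 5/4 - r/2
     else 0)"

definition p_plus :: "real \<Rightarrow> bool" where
  "p_plus r \<longleftrightarrow> (1 < r \<and> r \<le> 7/6) \<or> (17/12 < r \<and> r \<le> 3/2) \<or> r = 5/2"

definition P1_estimate :: "real \<Rightarrow> real \<Rightarrow> bool" where
  "P1_estimate r s \<longleftrightarrow>
    (\<exists>C. \<forall>(f::real \<Rightarrow> complex) (\<tau>::real).
       set_integrable lborel {-pi..pi} f \<and> in_H s (fourier_coeff f) \<and> 0 < \<tau> \<longrightarrow>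
         in_H r (P1_coeff \<tau> (fourier_coeff (\<lambda>x. cnj (f x)))) \<and>
         sob_norm r (P1_coeff \<tau> (fourier_coeff (\<lambda>x. cnj (f x))))
           \<le> C * \<tau>^2 * (sob_norm s (fourier_coeff f))^2)"

end

theory Submission
  imports Defs
begin

lemma mvt_pow:
  fixes x g :: real
  assumes "x > 0"
  shows "\<exists>z. x < z \<and> z < x + 1 \<and> (x+1) powr (1+g) - x powr (1+g) = (1+g) * z powr g"
proof -
  have d: "\<And>z. z > 0 \<Longrightarrow> ((\<lambda>z. z powr (1+g)) has_real_derivative (1+g) * z powr g) (at z)"
    using has_real_derivative_powr[of _ "1+g"] by simp
  have "continuous_on {x..x+1} (\<lambda>z. z powr (1+g))"
    by (rule continuous_on_powr) (use assms in \<open>auto intro: continuous_intros\<close>)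
  moreover have "\<And>z. x < z \<Longrightarrow> z < x+1 \<Longrightarrow> (\<lambda>z. z powr (1+g)) differentiable (at z)"
    using d assms real_differentiable_def by (metis less_trans)
  ultimately obtain l z where lz: "x < z" "z < x+1" "DERIV (\<lambda>z. z powr (1+g)) z :> l"
     "(x+1) powr (1+g) - x powr (1+g) = (x + 1 - x) * l"
    using MVT[of x "x+1" "\<lambda>z. z powr (1+g)"] by auto
  have "l = (1+g) * z powr g" using d[of z] lz(1,3) assms
    by (meson DERIV_unique less_trans)
  thus ?thesis using lz by auto
qed

lemma step_small:
  fixes g :: real and i :: nat
  assumes "-1 < g" "g < 0" "i \<ge> 1"
  shows "(real i + 1) powr g \<le> ((real i + 1) powr (1+g) - real i powr (1+g)) / (1+g)"
proof -
  obtain z where z: "real i < z" "z < real i + 1" "(real i+1) powr (1+g) - real i powr (1+g) = (1+g) * z powr g"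
    using mvt_pow[of "real i" g] assms by auto
  have "(real i + 1) powr g \<le> z powr g"
    using z assms by (intro powr_mono2') auto
  hence "(1+g) * (real i + 1) powr g \<le> (1+g) * z powr g" using assms by (intro mult_left_mono) auto
  thus ?thesis using z assms by (simp add: field_simps)
qed

lemma step_large:
  fixes g :: real and i :: nat
  assumes "g < -1" "i \<ge> 1"
  shows "(real i + 1) powr g \<le> (real i powr (1+g) - (real i + 1) powr (1+g)) / (-1-g)"
proof -
  obtain z where z: "real i < z" "z < real i + 1" "(real i+1) powr (1+g) - real i powr (1+g) = (1+g) * z powr g"
    using mvt_pow[of "real i" g] assms by auto
  have "(real i + 1) powr g \<le> z powr g"
    using z assms by (intro powr_mono2') auto
  hence "(-1-g) * (real i + 1) powr g \<le> (-1-g) * z powr g" using assms by (intro mult_left_mono) auto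
  thus ?thesis using z assms by (simp add: field_simps)
qed


lemma powr_sq: "(x::real) > 0 \<Longrightarrow> (x powr a)^2 = x powr (2*a)"
  by (simp add: power2_eq_square powr_add[symmetric])

lemma four_powr: "(2 powr s)^2 = (4::real) powr s"
proof -
  have "(2::real) powr (2 * s) = (2 powr 2) powr s" by (rule powr_powr[symmetric])
  thus ?thesis by (simp add: powr_sq)
qed

lemma caseA:
  fixes L0 L1 L2 M r s c d ex :: real
  assumes pos: "L0 > 0" "L1 > 0" "L2 > 0" and s: "s \<ge> 0" and c0: "c \<ge> 0"
    and h1: "L0 \<le> 2 * L1" and hM: "0 \<le> M" "M \<le> c * L0 powr d * L2 powr ex"
  shows "(L0 powr r * M / (L1 powr s * L2 powr s))^2 \<le> c^2 * 4 powr s * L0 powr (2*r - 2 * s + 2 * d) * L2 powr (2*ex - 2 * s)"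
proof -
  have a: "L0 powr s \<le> 2 powr s * L1 powr s"
    using h1 pos s by (metis powr_mono2 less_imp_le powr_mult)
  have "L0 powr r * M / (L1 powr s * L2 powr s) = (L0 powr r / L0 powr s) * (L0 powr s / L1 powr s) * (M / L2 powr s)"
    using pos by (simp add: field_simps)
  also have "\<dots> \<le> (L0 powr r / L0 powr s) * 2 powr s * (c * L0 powr d * L2 powr ex / L2 powr s)"
    using pos a hM c0 by (intro mult_mono divide_right_mono) (auto simp: field_simps intro: order_trans[OF hM(1) hM(2)])
  also have "\<dots> = 2 powr s * c * (L0 powr (r - s + d) * L2 powr (ex - s))"
    using pos by (simp add: powr_diff powr_add)
  finally have b: "L0 powr r * M / (L1 powr s * L2 powr s) \<le> 2 powr s * c * (L0 powr (r - s + d) * L2 powr (ex - s))" .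
  have c00: "0 \<le> L0 powr r * M / (L1 powr s * L2 powr s)" using pos hM by simp
  have "(L0 powr r * M / (L1 powr s * L2 powr s))^2 \<le> (2 powr s * c * (L0 powr (r - s + d) * L2 powr (ex - s)))^2"
    using b c00 by (intro power_mono) auto
  also have "\<dots> = c^2 * (2 powr s)^2 * (L0 powr (r - s + d))^2 * (L2 powr (ex-s))^2"
    by (simp add: power_mult_distrib)
  also have "\<dots> = c^2 * 4 powr s * L0 powr (2*(r - s + d)) * L2 powr (2*(ex-s))"
    using pos by (simp add: powr_sq four_powr)
  also have "\<dots> = c^2 * 4 powr s * L0 powr (2*r - 2 * s + 2 * d) * L2 powr (2*ex - 2 * s)"
    by (simp add: algebra_simps)
  finally show ?thesis .
qed

lemma caseC:
  fixes L0 L1 L2 M r s c d ex :: real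
  assumes pos: "L0 > 0" "L1 > 0" "L2 > 0" and s: "s \<ge> 0" and c0: "c \<ge> 0"
    and h1: "L1 \<le> 2 * L2" and hM: "0 \<le> M" "M \<le> c * L0 powr d * L1 powr ex"
  shows "(L0 powr r * M / (L1 powr s * L2 powr s))^2 \<le> c^2 * 4 powr s * L0 powr (2*r + 2 * d) * L1 powr (2*ex - 4 * s)"
proof -
  have a: "L1 powr s \<le> 2 powr s * L2 powr s"
    using h1 pos s by (metis powr_mono2 less_imp_le powr_mult)
  have e2: "L1 powr (2 * s) = L1 powr s * L1 powr s" by (simp add: powr_add[symmetric])
  have "L0 powr r * M / (L1 powr s * L2 powr s) = L0 powr r * (M / (L1 powr s * L1 powr s)) * (L1 powr s / L2 powr s)"
    using pos by (simp add: field_simps)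
  also have "\<dots> \<le> L0 powr r * (c * L0 powr d * L1 powr ex / (L1 powr s * L1 powr s)) * 2 powr s"
    using pos a hM c0 by (intro mult_mono divide_right_mono) (auto simp: field_simps intro: order_trans[OF hM(1) hM(2)])
  also have "\<dots> = 2 powr s * c * (L0 powr (r + d) * L1 powr (ex - 2 * s))"
    using pos by (simp add: powr_diff powr_add e2)
  finally have b: "L0 powr r * M / (L1 powr s * L2 powr s) \<le> 2 powr s * c * (L0 powr (r + d) * L1 powr (ex - 2 * s))" .
  have c00: "0 \<le> L0 powr r * M / (L1 powr s * L2 powr s)" using pos hM by simp
  have "(L0 powr r * M / (L1 powr s * L2 powr s))^2 \<le> (2 powr s * c * (L0 powr (r + d) * L1 powr (ex - 2 * s)))^2"
    using b c00 by (intro power_mono) auto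
  also have "\<dots> = c^2 * (2 powr s)^2 * (L0 powr (r + d))^2 * (L1 powr (ex - 2 * s))^2"
    by (simp add: power_mult_distrib)
  also have "\<dots> = c^2 * 4 powr s * L0 powr (2*(r + d)) * L1 powr (2*(ex - 2 * s))"
    using pos by (simp add: powr_sq four_powr)
  also have "\<dots> = c^2 * 4 powr s * L0 powr (2*r + 2 * d) * L1 powr (2*ex - 4 * s)"
    by (simp add: algebra_simps)
  finally show ?thesis .
qed


definition Mf :: "int \<Rightarrow> int \<Rightarrow> real" where
  "Mf k k1 = (of_int k1)^2 / (of_int k)^2 * min ((of_int (k-k1))^2) \<bar>of_int (k*k1)\<bar>"

definition Lw :: "int \<Rightarrow> real" where "Lw j = 1 + \<bar>of_int j\<bar>"

lemma Lw_pos: "Lw j > 0" and Lw_ge1: "Lw j \<ge> 1" by (auto simp: Lw_def)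

lemma Mf_nonneg: "Mf k k1 \<ge> 0" by (simp add: Mf_def)

lemma Mf_bound1:
  assumes "k \<noteq> 0"
  shows "Mf k k1 \<le> 2 * Lw k powr (-1) * Lw k1 powr 3"
proof -
  define u where "u = \<bar>real_of_int k1\<bar>"
  define w where "w = \<bar>real_of_int k\<bar>"
  have w1: "w \<ge> 1" using assms unfolding w_def by linarith
  have "Mf k k1 \<le> u^2 / w^2 * (w * u)"
    unfolding Mf_def u_def w_def power2_abs
    by (intro mult_left_mono) (auto simp: abs_mult)
  also have "\<dots> = u^3 / w" using w1 by (simp add: power2_eq_square power3_eq_cube)
  also have "\<dots> \<le> (1+u)^3 * (2 / (1+w))"
  proof -
    have a: "u^3 \<le> (1+u)^3" by (intro power_mono) (auto simp: u_def)
    have b: "1/w \<le> 2/(1+w)" using w1 by (simp add: divide_simps)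
    have "u^3 / w = u^3 * (1/w)" by simp
    also have "\<dots> \<le> (1+u)^3 * (2/(1+w))" using a b w1 by (intro mult_mono) (auto simp: u_def)
    finally show ?thesis .
  qed
  also have "\<dots> = 2 * Lw k powr (-1) * Lw k1 powr 3"
    by (simp add: Lw_def u_def w_def powr_minus divide_simps powr_realpow)
  finally show ?thesis .
qed

lemma Mf_bound2:
  assumes "k \<noteq> 0" "\<bar>k1\<bar> \<le> 2 * \<bar>k\<bar>"
  shows "Mf k k1 \<le> 4 * Lw k powr 0 * Lw (k-k1) powr 2"
proof -
  define u where "u = \<bar>real_of_int k1\<bar>"
  define v where "v = \<bar>real_of_int (k-k1)\<bar>"
  define w where "w = \<bar>real_of_int k\<bar>"
  have w1: "w \<ge> 1" using assms unfolding w_def by linarith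
  have uw: "u \<le> 2 * w" using assms unfolding u_def w_def by linarith
  have "Mf k k1 \<le> u^2 / w^2 * v^2"
    unfolding Mf_def u_def w_def v_def power2_abs
    by (intro mult_left_mono) auto
  also have "\<dots> \<le> 4 * v^2"
  proof -
    have "u^2 \<le> (2*w)^2" using uw by (intro power_mono) (auto simp: u_def)
    hence "u^2 / w^2 \<le> 4" using w1 by (simp add: divide_simps power_mult_distrib)
    thus ?thesis by (intro mult_right_mono) auto
  qed
  also have "\<dots> \<le> 4 * (1+v)^2" by (intro mult_left_mono power_mono) (auto simp: v_def)
  also have "\<dots> = 4 * Lw k powr 0 * Lw (k-k1) powr 2"
    by (simp add: Lw_def v_def powr_realpow)
  finally show ?thesis .
qed

definition TA :: "real \<Rightarrow> real \<Rightarrow> int \<Rightarrow> int \<Rightarrow> real" where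
  "TA r s k j = (if \<bar>j\<bar> \<le> 2 * \<bar>k\<bar> then 16 * 4 powr s * Lw k powr (2*r - 2 * s) * Lw j powr (4 - 2 * s) else 0)"
definition TB :: "real \<Rightarrow> real \<Rightarrow> int \<Rightarrow> int \<Rightarrow> real" where
  "TB r s k j = (if \<bar>j\<bar> \<le> 2 * \<bar>k\<bar> then 4 * 4 powr s * Lw k powr (2*r - 2 * s - 2) * Lw j powr (6 - 2 * s) else 0)"
definition TC :: "real \<Rightarrow> real \<Rightarrow> int \<Rightarrow> int \<Rightarrow> real" where
  "TC r s k j = (if \<bar>j\<bar> > \<bar>k\<bar> then 4 * 4 powr s * Lw k powr (2*r - 2) * Lw j powr (6 - 4 * s) else 0)"

lemma TA_nonneg: "TA r s k j \<ge> 0" and TB_nonneg: "TB r s k j \<ge> 0" and TC_nonneg: "TC r s k j \<ge> 0"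
  by (auto simp: TA_def TB_def TC_def)

lemma Lw_le2: "1 + \<bar>k\<bar> \<le> 2 * (1 + \<bar>j\<bar>) \<Longrightarrow> Lw k \<le> 2 * Lw j"
proof -
  assume "1 + \<bar>k\<bar> \<le> 2 * (1 + \<bar>j\<bar>)"
  hence "real_of_int (1 + \<bar>k\<bar>) \<le> real_of_int (2 * (1 + \<bar>j\<bar>))" by (simp only: of_int_le_iff)
  thus ?thesis by (simp add: Lw_def)
qed

lemma linA: "(a::int) \<le> b + c \<Longrightarrow> c \<le> b \<Longrightarrow> 1 + a \<le> 2 * (1 + b)" by arith
lemma linB: "(a::int) \<le> b + c \<Longrightarrow> b < c \<Longrightarrow> 1 + a \<le> 2 * (1 + c)" by arith
lemma linC: "(a::int) \<le> 2 * c \<Longrightarrow> 1 + a \<le> 2 * (1 + c)" by arith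

lemma geom3: fixes u v w :: int
  assumes "w \<le> u + v" "u \<le> w + v" "v \<le> w + u"
  shows "(v \<le> u \<and> u \<le> 2 * w) \<or> (u < v \<and> v \<le> 2 * w) \<or> (u \<le> 2 * v \<and> u > w)"
  using assms by linarith

lemma pointwise:
  assumes "k \<noteq> 0" "s \<ge> 0"
  shows "(Lw k powr r * Mf k k1 / (Lw k1 powr s * Lw (k-k1) powr s))^2
          \<le> TA r s k (k-k1) + TB r s k k1 + TC r s k k1"
proof -
  note nn = TA_nonneg[of r s k "k-k1"] TB_nonneg[of r s k k1] TC_nonneg[of r s k k1]
  note pos = Lw_pos[of k] Lw_pos[of k1] Lw_pos[of "k-k1"]
  have tri: "\<bar>k\<bar> \<le> \<bar>k1\<bar> + \<bar>k-k1\<bar>" "\<bar>k1\<bar> \<le> \<bar>k\<bar> + \<bar>k-k1\<bar>" "\<bar>k-k1\<bar> \<le> \<bar>k\<bar> + \<bar>k1\<bar>" by auto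
  consider (A) "\<bar>k-k1\<bar> \<le> \<bar>k1\<bar>" "\<bar>k1\<bar> \<le> 2 * \<bar>k\<bar>"
    | (B) "\<bar>k1\<bar> < \<bar>k-k1\<bar>" "\<bar>k-k1\<bar> \<le> 2 * \<bar>k\<bar>"
    | (C) "\<bar>k1\<bar> \<le> 2 * \<bar>k-k1\<bar>" "\<bar>k1\<bar> > \<bar>k\<bar>"
  proof -
    have "(\<bar>k-k1\<bar> \<le> \<bar>k1\<bar> \<and> \<bar>k1\<bar> \<le> 2 * \<bar>k\<bar>) \<or> (\<bar>k1\<bar> < \<bar>k-k1\<bar> \<and> \<bar>k-k1\<bar> \<le> 2 * \<bar>k\<bar>)
       \<or> (\<bar>k1\<bar> \<le> 2 * \<bar>k-k1\<bar> \<and> \<bar>k1\<bar> > \<bar>k\<bar>)"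
      using tri by (metis (no_types, lifting) geom3)
    thus ?thesis using that by blast
  qed
  then show ?thesis
  proof cases
    case A
    have h1: "Lw k \<le> 2 * Lw k1" using A tri by (intro Lw_le2) (meson linA)
    have "(Lw k powr r * Mf k k1 / (Lw k1 powr s * Lw (k-k1) powr s))^2
        \<le> 4^2 * 4 powr s * Lw k powr (2*r - 2 * s + 2 * 0) * Lw (k-k1) powr (2*2 - 2 * s)"
      by (rule caseA[OF pos assms(2) _ h1 Mf_nonneg Mf_bound2[OF assms(1) A(2)]]) simp
    also have "\<dots> = TA r s k (k-k1)" using A by (simp add: TA_def)
    finally show ?thesis using nn by linarith
  next
    case B
    have h1: "Lw k \<le> 2 * Lw (k-k1)" using B tri by (intro Lw_le2) (meson linB)
    have "(Lw k powr r * Mf k k1 / (Lw (k-k1) powr s * Lw k1 powr s))^2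
        \<le> 2^2 * 4 powr s * Lw k powr (2*r - 2 * s + 2 * (-1)) * Lw k1 powr (2*3 - 2 * s)"
      by (rule caseA[OF pos(1,3,2) assms(2) _ h1 Mf_nonneg Mf_bound1[OF assms(1)]]) simp
    also have "\<dots> = TB r s k k1" using B by (simp add: TB_def)
    finally show ?thesis using nn by (simp add: mult.commute)
  next
    case C
    have h1: "Lw k1 \<le> 2 * Lw (k-k1)" using C tri by (intro Lw_le2) (meson linC)
    have "(Lw k powr r * Mf k k1 / (Lw k1 powr s * Lw (k-k1) powr s))^2
        \<le> 2^2 * 4 powr s * Lw k powr (2*r + 2 * (-1)) * Lw k1 powr (2*3 - 4 * s)"
      by (rule caseC[OF pos assms(2) _ h1 Mf_nonneg Mf_bound1[OF assms(1)]]) simp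
    also have "\<dots> = TC r s k k1" using C by (simp add: TC_def)
    finally show ?thesis using nn by linarith
  qed
qed


lemma PSa: assumes "g \<ge> 0"
  shows "(\<Sum>i\<in>{m..n}. (real i + 1) powr g) \<le> (real n + 1) powr (1+g)"
proof -
  have "(\<Sum>i\<in>{m..n}. (real i + 1) powr g) \<le> (\<Sum>i\<in>{m..n}. (real n + 1) powr g)"
    using assms by (intro sum_mono powr_mono2) auto
  also have "\<dots> = real (card {m..n}) * (real n + 1) powr g" by simp
  also have "\<dots> \<le> (real n + 1) * (real n + 1) powr g"
    by (intro mult_right_mono) auto
  also have "\<dots> = (real n + 1) powr (1+g)" by (simp add: powr_add)
  finally show ?thesis .
qed

lemma PSb: assumes "g \<le> 0"
  shows "(\<Sum>i\<in>{m..n}. (real i + 1) powr g) \<le> real n + 1"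
proof -
  have "(\<Sum>i\<in>{m..n}. (real i + 1) powr g) \<le> (\<Sum>i\<in>{m..n}. 1)"
  proof (intro sum_mono)
    fix i assume "i \<in> {m..n}"
    have "(real i + 1) powr g \<le> (real i + 1) powr 0" using assms by (intro powr_mono) auto
    thus "(real i + 1) powr g \<le> 1" by simp
  qed
  also have "\<dots> \<le> real n + 1" by simp
  finally show ?thesis .
qed

lemma PSc: assumes "-1 < g" "g < 0"
  shows "(\<Sum>i\<in>{0..n}. (real i + 1) powr g) \<le> (real n + 1) powr (1+g) / (1+g)"
proof (induction n)
  case 0
  then show ?case using assms by (simp add: divide_simps)
next
  case (Suc n)
  have "(\<Sum>i\<in>{0..Suc n}. (real i + 1) powr g) = (\<Sum>i\<in>{0..n}. (real i + 1) powr g) + (real (Suc n) + 1) powr g"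
    by simp
  also have "\<dots> \<le> (real n + 1) powr (1+g) / (1+g) + ((real (Suc n) + 1) powr (1+g) - real (Suc n) powr (1+g)) / (1+g)"
    using Suc step_small[of g "Suc n"] assms by (intro add_mono) auto
  also have "\<dots> = (real (Suc n) + 1) powr (1+g) / (1+g)" by (simp add: divide_simps add.commute)
  finally show ?case .
qed

lemma PSe: assumes "g < -1" "m \<ge> 1"
  shows "(\<Sum>i\<in>{m..n}. (real i + 1) powr g) \<le> real m powr (1+g) / (-1-g)"
proof -
  define f where "f i = - (real i powr (1+g)) / (-1-g)" for i :: nat
  have "(\<Sum>i\<in>{m..n}. (real i + 1) powr g) \<le> (\<Sum>i\<in>{m..n}. f (Suc i) - f i)"
  proof (intro sum_mono)
    fix i assume "i \<in> {m..n}" hence i1: "i \<ge> 1" using assms by auto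
    have "f (Suc i) - f i = (real i powr (1+g) - (real i + 1) powr (1+g)) / (-1-g)"
      using assms(1) by (simp add: f_def diff_divide_distrib[symmetric] add_divide_distrib[symmetric] add.commute)
    thus "(real i + 1) powr g \<le> f (Suc i) - f i" using step_large[OF assms(1) i1] by simp
  qed
  also have "\<dots> \<le> - f m"
  proof (cases "m \<le> Suc n")
    case True
    hence "(\<Sum>i\<in>{m..n}. f (Suc i) - f i) = f (Suc n) - f m" by (rule sum_Suc_diff)
    moreover have "f (Suc n) \<le> 0" using assms by (simp add: f_def divide_simps)
    ultimately show ?thesis by simp
  next
    case False
    hence "{m..n} = {}" by auto
    thus ?thesis using assms by (simp add: f_def divide_simps)
  qed
  also have "\<dots> = real m powr (1+g) / (-1-g)" by (simp add: f_def)
  finally show ?thesis .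
qed

lemma PSd: assumes "g < -1"
  shows "(\<Sum>i\<in>{0..n}. (real i + 1) powr g) \<le> 1 + 1 / (-1-g)"
proof (cases n)
  case 0 thus ?thesis using assms by simp
next
  case (Suc n')
  have "{0..n} = insert 0 {1..n}" by auto
  hence "(\<Sum>i\<in>{0..n}. (real i + 1) powr g) = 1 + (\<Sum>i\<in>{1..n}. (real i + 1) powr g)" by simp
  also have "\<dots> \<le> 1 + real 1 powr (1+g) / (-1-g)" using PSe[OF assms, of 1 n] by simp
  finally show ?thesis by simp
qed

lemma sym_sum:
  fixes F :: "int set" and a N :: int
  assumes "finite F" "F \<subseteq> {j. a \<le> \<bar>j\<bar> \<and> \<bar>j\<bar> \<le> N}" "0 \<le> a" "0 \<le> N"
  shows "(\<Sum>j\<in>F. Lw j powr g) \<le> 2 * (\<Sum>i\<in>{nat a..nat N}. (real i + 1) powr g)"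
proof -
  define A where "A = {a..N}"
  have FA: "F \<subseteq> A \<union> uminus ` A"
  proof
    fix j assume "j \<in> F"
    hence "a \<le> \<bar>j\<bar>" "\<bar>j\<bar> \<le> N" using assms by auto
    thus "j \<in> A \<union> uminus ` A" unfolding A_def
      by (cases "j \<ge> 0") (auto intro!: image_eqI[of _ _ "-j"])
  qed
  have "(\<Sum>j\<in>F. Lw j powr g) \<le> (\<Sum>j\<in>A \<union> uminus ` A. Lw j powr g)"
    by (rule sum_mono2) (use FA in \<open>auto simp: A_def\<close>)
  also have "\<dots> \<le> (\<Sum>j\<in>A. Lw j powr g) + (\<Sum>j\<in>uminus ` A. Lw j powr g)"
    by (subst sum_Un) (auto simp: A_def intro!: sum_nonneg)
  also have "(\<Sum>j\<in>uminus ` A. Lw j powr g) = (\<Sum>j\<in>A. Lw j powr g)"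
    by (subst sum.reindex) (auto simp: Lw_def)
  also have "(\<Sum>j\<in>A. Lw j powr g) = (\<Sum>i\<in>{nat a..nat N}. (real i + 1) powr g)"
  proof -
    have "A = int ` {nat a..nat N}" unfolding A_def using assms(3,4)
      by (simp add: image_int_atLeastAtMost)
    thus ?thesis by (simp add: sum.reindex Lw_def add.commute)
  qed
  finally show ?thesis by simp
qed


lemma Lpow_le1: "L \<ge> 1 \<Longrightarrow> e \<le> 0 \<Longrightarrow> (L::real) powr e \<le> 1"
  using powr_mono[of e 0 L] by simp

lemma sumbound_fin:
  assumes "(g > -1 \<and> e + 1 + g \<le> 0) \<or> (g < -1 \<and> e \<le> 0) \<or> (g \<le> 0 \<and> e + 1 \<le> 0)"
  shows "\<exists>C. \<forall>(n::nat) (L::real). L \<ge> 1 \<longrightarrow> real n + 1 \<le> 2 * L \<longrightarrow>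
            L powr e * (\<Sum>i\<in>{0..n}. (real i + 1) powr g) \<le> C"
proof -
  have key: "L powr e * (2 * L) powr x \<le> 2 powr x" if "L \<ge> 1" "e + x \<le> 0" "x \<ge> 0" for L x :: real
  proof -
    have "L powr e * (2 * L) powr x = 2 powr x * L powr (e + x)"
      using that by (simp add: powr_mult powr_add)
    also have "\<dots> \<le> 2 powr x * 1" using that Lpow_le1[of L "e+x"] by (intro mult_left_mono) auto
    finally show ?thesis by simp
  qed
  consider (a) "g \<ge> 0" "e + 1 + g \<le> 0" | (c) "g > -1" "g < 0" "e + 1 + g \<le> 0" | (d) "g < -1" "e \<le> 0"
    | (b) "g \<le> 0" "e + 1 \<le> 0"
    using assms by linarith
  then show ?thesis
  proof cases
    case a
    show ?thesis
    proof (intro exI allI impI)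
      fix n :: nat and L :: real assume L: "L \<ge> 1" "real n + 1 \<le> 2 * L"
      have "L powr e * (\<Sum>i\<in>{0..n}. (real i + 1) powr g) \<le> L powr e * (real n + 1) powr (1+g)"
        using PSa[OF a(1)] by (intro mult_left_mono) auto
      also have "\<dots> \<le> L powr e * (2 * L) powr (1+g)"
        using L a by (intro mult_left_mono powr_mono2) auto
      also have "\<dots> \<le> 2 powr (1+g)" using key[of L "1+g"] L a by auto
      finally show "L powr e * (\<Sum>i\<in>{0..n}. (real i + 1) powr g) \<le> 2 powr (1+g)" .
    qed
  next
    case c
    show ?thesis
    proof (intro exI allI impI)
      fix n :: nat and L :: real assume L: "L \<ge> 1" "real n + 1 \<le> 2 * L"
      have "L powr e * (\<Sum>i\<in>{0..n}. (real i + 1) powr g) \<le> L powr e * ((real n + 1) powr (1+g) / (1+g))"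
        using PSc[OF c(1,2)] by (intro mult_left_mono) auto
      also have "\<dots> \<le> L powr e * ((2 * L) powr (1+g) / (1+g))"
        using L c by (intro mult_left_mono divide_right_mono powr_mono2) auto
      also have "\<dots> = (L powr e * (2 * L) powr (1+g)) / (1+g)" by simp
      also have "\<dots> \<le> 2 powr (1+g) / (1+g)" using key[of L "1+g"] L c by (intro divide_right_mono) auto
      finally show "L powr e * (\<Sum>i\<in>{0..n}. (real i + 1) powr g) \<le> 2 powr (1+g) / (1+g)" .
    qed
  next
    case d
    show ?thesis
    proof (intro exI allI impI)
      fix n :: nat and L :: real assume L: "L \<ge> 1" "real n + 1 \<le> 2 * L"
      have "L powr e * (\<Sum>i\<in>{0..n}. (real i + 1) powr g) \<le> 1 * (1 + 1 / (-1-g))"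
        using PSd[OF d(1)] Lpow_le1[OF L(1) d(2)] d by (intro mult_mono) (auto intro: sum_nonneg)
      thus "L powr e * (\<Sum>i\<in>{0..n}. (real i + 1) powr g) \<le> 1 + 1 / (-1-g)" by simp
    qed
  next
    case b
    show ?thesis
    proof (intro exI allI impI)
      fix n :: nat and L :: real assume L: "L \<ge> 1" "real n + 1 \<le> 2 * L"
      have "L powr e * (\<Sum>i\<in>{0..n}. (real i + 1) powr g) \<le> L powr e * (2 * L)"
        using order_trans[OF PSb[OF b(1), of 0 n] L(2)] by (intro mult_left_mono) auto
      also have "\<dots> = 2 * L powr (e + 1)" using L by (simp add: powr_add)
      also have "\<dots> \<le> 2" using Lpow_le1[OF L(1) b(2)] by simp
      finally show "L powr e * (\<Sum>i\<in>{0..n}. (real i + 1) powr g) \<le> 2" .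
    qed
  qed
qed


lemma Tsum_generic:
  assumes cond: "(g > -1 \<and> e + 1 + g \<le> 0) \<or> (g < -1 \<and> e \<le> 0) \<or> (g \<le> 0 \<and> e + 1 \<le> 0)" and c: "c \<ge> 0"
  shows "\<exists>B. \<forall>k H. k \<noteq> 0 \<longrightarrow> finite H \<longrightarrow>
     (\<Sum>j\<in>H. (if \<bar>j\<bar> \<le> 2 * \<bar>k\<bar> then c * Lw k powr e * Lw j powr g else 0)) \<le> B"
proof -
  obtain C where C: "\<And>n L. L \<ge> 1 \<Longrightarrow> real n + 1 \<le> 2 * L \<Longrightarrow> L powr e * (\<Sum>i\<in>{0..n}. (real i + 1) powr g) \<le> C"
    using sumbound_fin[OF cond] by blast
  show ?thesis
  proof (intro exI allI impI)
    fix k :: int and H :: "int set" assume k: "k \<noteq> 0" and H: "finite H"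
    let ?G = "{j\<in>H. \<bar>j\<bar> \<le> 2 * \<bar>k\<bar>}"
    have "(\<Sum>j\<in>H. (if \<bar>j\<bar> \<le> 2 * \<bar>k\<bar> then c * Lw k powr e * Lw j powr g else 0))
        = (\<Sum>j\<in>?G. c * Lw k powr e * Lw j powr g)"
      using H by (simp add: sum.inter_filter)
    also have "\<dots> = c * Lw k powr e * (\<Sum>j\<in>?G. Lw j powr g)" by (simp add: sum_distrib_left)
    also have "\<dots> \<le> c * Lw k powr e * (2 * (\<Sum>i\<in>{nat 0..nat (2 * \<bar>k\<bar>)}. (real i + 1) powr g))"
      using H c by (intro mult_left_mono sym_sum) auto
    also have "\<dots> = 2 * c * (Lw k powr e * (\<Sum>i\<in>{0..nat (2 * \<bar>k\<bar>)}. (real i + 1) powr g))" by simp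
    also have "\<dots> \<le> 2 * c * C"
    proof (intro mult_left_mono C)
      show "1 \<le> Lw k" by (rule Lw_ge1)
      show "real (nat (2 * \<bar>k\<bar>)) + 1 \<le> 2 * Lw k" by (simp add: Lw_def)
    qed (use c in auto)
    finally show "(\<Sum>j\<in>H. (if \<bar>j\<bar> \<le> 2 * \<bar>k\<bar> then c * Lw k powr e * Lw j powr g else 0)) \<le> 2 * c * C" .
  qed
qed

lemma TC_sum:
  assumes g: "g < -1" and e: "e + 1 + g \<le> 0" and c: "c \<ge> 0"
  shows "\<exists>B. \<forall>k H. k \<noteq> 0 \<longrightarrow> finite H \<longrightarrow>
     (\<Sum>j\<in>H. (if \<bar>j\<bar> > \<bar>k\<bar> then c * Lw k powr e * Lw j powr g else 0)) \<le> B"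
proof (intro exI allI impI)
  fix k :: int and H :: "int set" assume k: "k \<noteq> 0" and H: "finite H"
  let ?G = "{j\<in>H. \<bar>j\<bar> > \<bar>k\<bar>}"
  define N where "N = Max (insert (\<bar>k\<bar>+1) (abs ` H))"
  have N3: "\<bar>k\<bar> + 1 \<le> N" unfolding N_def using H by (intro Max_ge) auto
  have N1: "\<And>j. j \<in> H \<Longrightarrow> \<bar>j\<bar> \<le> N" unfolding N_def using H by (intro Max_ge) auto
  have N: "\<And>j. j \<in> H \<Longrightarrow> \<bar>j\<bar> \<le> N" "0 \<le> N" "\<bar>k\<bar> + 1 \<le> N"
    using N1 N3 by auto
  have "(\<Sum>j\<in>H. (if \<bar>j\<bar> > \<bar>k\<bar> then c * Lw k powr e * Lw j powr g else 0))
      = (\<Sum>j\<in>?G. c * Lw k powr e * Lw j powr g)"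
    using H by (simp add: sum.inter_filter)
  also have "\<dots> = c * Lw k powr e * (\<Sum>j\<in>?G. Lw j powr g)" by (simp add: sum_distrib_left)
  also have "\<dots> \<le> c * Lw k powr e * (2 * (\<Sum>i\<in>{nat (\<bar>k\<bar>+1)..nat N}. (real i + 1) powr g))"
    using H c N by (intro mult_left_mono sym_sum) auto
  also have "\<dots> \<le> c * Lw k powr e * (2 * (real (nat (\<bar>k\<bar>+1)) powr (1+g) / (-1-g)))"
    using c g by (intro mult_left_mono PSe) auto
  also have "\<dots> = 2 * c / (-1-g) * (Lw k powr e * Lw k powr (1+g))"
    by (simp add: Lw_def add.commute)
  also have "\<dots> = 2 * c / (-1-g) * Lw k powr (e + 1 + g)"
    by (simp add: powr_add[symmetric] add.assoc)
  also have "\<dots> \<le> 2 * c / (-1-g) * 1"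
    using c g e Lpow_le1[OF Lw_ge1 e] by (intro mult_left_mono) auto
  finally show "(\<Sum>j\<in>H. (if \<bar>j\<bar> > \<bar>k\<bar> then c * Lw k powr e * Lw j powr g else 0)) \<le> 2 * c / (-1-g)" by simp
qed


definition KL :: "real \<Rightarrow> real \<Rightarrow> int \<Rightarrow> int \<Rightarrow> real" where
  "KL r s k k1 = Lw k powr r * Mf k k1 / (Lw k1 powr s * Lw (k-k1) powr s)"

lemma Ksum:
  assumes r: "0 \<le> r" "r \<le> s" "2 * r + 5 \<le> 4 * s" "s \<noteq> 5/2" "7/4 < s"
  shows "\<exists>B. \<forall>k F. k \<noteq> 0 \<longrightarrow> finite F \<longrightarrow> (\<Sum>k1\<in>F. (KL r s k k1)^2) \<le> B"
proof -
  have condA: "(4 - 2 * s > -1 \<and> (2*r - 2 * s) + 1 + (4 - 2 * s) \<le> 0) \<or> (4 - 2 * s < -1 \<and> 2*r - 2 * s \<le> 0)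
      \<or> (4 - 2 * s \<le> 0 \<and> (2*r - 2 * s) + 1 \<le> 0)"
    using r by (cases "s < 5/2") auto
  obtain BA where BA: "\<And>k H. k \<noteq> 0 \<Longrightarrow> finite H \<Longrightarrow> (\<Sum>j\<in>H. TA r s k j) \<le> BA"
    using Tsum_generic[OF condA, of "16 * 4 powr s"] unfolding TA_def by auto
  have condB: "(6 - 2 * s > -1 \<and> (2*r - 2 * s - 2) + 1 + (6 - 2 * s) \<le> 0) \<or> (6 - 2 * s < -1 \<and> 2*r - 2 * s - 2 \<le> 0)
      \<or> (6 - 2 * s \<le> 0 \<and> (2*r - 2 * s - 2) + 1 \<le> 0)"
    using r by (cases "s < 3") auto
  obtain BB where BB: "\<And>k H. k \<noteq> 0 \<Longrightarrow> finite H \<Longrightarrow> (\<Sum>j\<in>H. TB r s k j) \<le> BB"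
    using Tsum_generic[OF condB, of "4 * 4 powr s"] unfolding TB_def by auto
  obtain BC where BC: "\<And>k H. k \<noteq> 0 \<Longrightarrow> finite H \<Longrightarrow> (\<Sum>j\<in>H. TC r s k j) \<le> BC"
    using TC_sum[of "6 - 4 * s" "2*r - 2" "4 * 4 powr s"] r unfolding TC_def by auto
  show ?thesis
  proof (intro exI allI impI)
    fix k :: int and F :: "int set" assume k: "k \<noteq> 0" and F: "finite F"
    have "(\<Sum>k1\<in>F. (KL r s k k1)^2) \<le> (\<Sum>k1\<in>F. TA r s k (k-k1) + TB r s k k1 + TC r s k k1)"
      unfolding KL_def using k r by (intro sum_mono pointwise) auto
    also have "\<dots> = (\<Sum>k1\<in>F. TA r s k (k-k1)) + (\<Sum>k1\<in>F. TB r s k k1) + (\<Sum>k1\<in>F. TC r s k k1)"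
      by (simp add: sum.distrib)
    also have "(\<Sum>k1\<in>F. TA r s k (k-k1)) = (\<Sum>j\<in>(\<lambda>k1. k-k1) ` F. TA r s k j)"
      by (subst sum.reindex) (auto simp: inj_on_def)
    also have "\<dots> + (\<Sum>k1\<in>F. TB r s k k1) + (\<Sum>k1\<in>F. TC r s k k1) \<le> BA + BB + BC"
      using BA[OF k] BB[OF k F] BC[OF k F] F by (intro add_mono) auto
    finally show "(\<Sum>k1\<in>F. (KL r s k k1)^2) \<le> BA + BB + BC" .
  qed
qed


lemma exp_i_bound: "cmod (exp (\<i> * complex_of_real x) - 1) \<le> \<bar>x\<bar>"
proof -
  have e: "exp (\<i> * complex_of_real x) - 1 = Complex (cos x - 1) (sin x)"
    by (simp add: exp_Euler complex_eq_iff cos_of_real sin_of_real)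
  have "(cos x - 1)^2 + (sin x)^2 = 2 - 2 * cos x"
    using sin_cos_squared_add[of x] by (simp add: power2_eq_square algebra_simps)
  also have "\<dots> = 4 * (sin (x/2))^2" using cos_double_sin[of "x/2"] by simp
  also have "\<dots> \<le> 4 * (x/2)^2"
  proof -
    have "\<bar>sin (x/2)\<bar> \<le> \<bar>x/2\<bar>" by (rule abs_sin_x_le_abs_x)
    hence "(sin (x/2))^2 \<le> (x/2)^2" by (metis abs_ge_zero power2_abs power_mono)
    thus ?thesis by simp
  qed
  also have "\<dots> = x^2" by (simp add: power2_eq_square)
  finally have "(cos x - 1)^2 + (sin x)^2 \<le> x^2" .
  thus ?thesis unfolding e by (simp add: cmod_def real_sqrt_le_iff) (metis real_sqrt_abs real_sqrt_le_mono)
qed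

lemma exp_factor_bound:
  fixes s a :: real
  shows "cmod (exp (- 2 * \<i> * complex_of_real s * complex_of_real a) - 1) \<le> 2 * \<bar>s\<bar> * \<bar>a\<bar>"
    and "cmod (exp (- 2 * \<i> * complex_of_real s * complex_of_real a) - 1) \<le> 2"
proof -
  have eq: "- 2 * \<i> * complex_of_real s * complex_of_real a = \<i> * complex_of_real (- 2 * s * a)" by simp
  show "cmod (exp (- 2 * \<i> * complex_of_real s * complex_of_real a) - 1) \<le> 2 * \<bar>s\<bar> * \<bar>a\<bar>"
    unfolding eq using exp_i_bound[of "- 2 * s * a"] by (simp add: abs_mult)
  have "cmod (exp (\<i> * complex_of_real (- 2 * s * a)) - 1) \<le> cmod (exp (\<i> * complex_of_real (- 2 * s * a))) + cmod 1"
    by (rule norm_triangle_ineq4)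
  thus "cmod (exp (- 2 * \<i> * complex_of_real s * complex_of_real a) - 1) \<le> 2" unfolding eq by simp
qed

lemma integral_bound:
  fixes a b \<tau> :: real
  assumes "\<tau> > 0" "a \<ge> 0"
  shows "norm (integral {0..\<tau>} (\<lambda>s::real.
            (exp (- 2 * \<i> * complex_of_real s * complex_of_real a) - 1) *
            (exp (- 2 * \<i> * complex_of_real s * complex_of_real b) - 1))) \<le> 4 * \<tau>^2 * min a \<bar>b\<bar>"
proof -
  let ?f = "\<lambda>s::real. (exp (- 2 * \<i> * complex_of_real s * complex_of_real a) - 1) *
            (exp (- 2 * \<i> * complex_of_real s * complex_of_real b) - 1)"
  have cont: "continuous_on {0..\<tau>} ?f" by (intro continuous_intros)
  have hi: "(?f has_integral integral {0..\<tau>} ?f) {0..\<tau>}"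
    using integrable_continuous_interval[OF cont] by (rule integrable_integral)
  have bd: "norm (?f s) \<le> 4 * \<tau> * min a \<bar>b\<bar>" if s: "s \<in> {0..\<tau>}" for s
  proof -
    have s0: "0 \<le> s" "s \<le> \<tau>" using s by auto
    note A1 = exp_factor_bound(1)[of s a] and A2 = exp_factor_bound(2)[of s a]
    note B1 = exp_factor_bound(1)[of s b] and B2 = exp_factor_bound(2)[of s b]
    have n: "norm (?f s) = cmod (exp (- 2 * \<i> * complex_of_real s * complex_of_real a) - 1) *
              cmod (exp (- 2 * \<i> * complex_of_real s * complex_of_real b) - 1)" by (simp add: norm_mult)
    have "norm (?f s) \<le> (2 * \<bar>s\<bar> * \<bar>a\<bar>) * 2" unfolding n by (intro mult_mono A1 B2) auto
    also have "\<dots> \<le> 4 * \<tau> * a" using s0 assms by (simp add: mult_right_mono)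
    finally have c1: "norm (?f s) \<le> 4 * \<tau> * a" .
    have "norm (?f s) \<le> 2 * (2 * \<bar>s\<bar> * \<bar>b\<bar>)" unfolding n by (intro mult_mono A2 B1) auto
    also have "\<dots> \<le> 4 * \<tau> * \<bar>b\<bar>" using s0 by (simp add: mult_right_mono)
    finally have c2: "norm (?f s) \<le> 4 * \<tau> * \<bar>b\<bar>" .
    show ?thesis using c1 c2 by (simp add: min_def)
  qed
  have "norm (integral {0..\<tau>} ?f) \<le> 4 * \<tau> * min a \<bar>b\<bar> * Henstock_Kurzweil_Integration.content {0..\<tau>}"
    by (rule has_integral_bound_real[OF _ _ hi, of _ "{}"]) (use assms bd in auto)
  thus ?thesis using assms by (simp add: power2_eq_square mult_ac)
qed


lemma bdd_summable:
  fixes f :: "'a \<Rightarrow> real"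
  assumes "\<And>x. f x \<ge> 0" "\<And>F. finite F \<Longrightarrow> sum f F \<le> B"
  shows "f summable_on UNIV" "infsum f UNIV \<le> B"
proof -
  show s: "f summable_on UNIV"
    by (rule nonneg_bdd_above_summable_on) (use assms in \<open>auto intro!: bdd_aboveI2\<close>)
  show "infsum f UNIV \<le> B" by (rule infsum_le_finite_sums[OF s]) (use assms in auto)
qed

lemma infsum_finsum:
  fixes f :: "'b \<Rightarrow> 'a \<Rightarrow> real"
  assumes "finite F" "\<And>k. k \<in> F \<Longrightarrow> f k summable_on A"
  shows "(\<lambda>y. \<Sum>k\<in>F. f k y) summable_on A \<and> infsum (\<lambda>y. \<Sum>k\<in>F. f k y) A = (\<Sum>k\<in>F. infsum (f k) A)"
  using assms
proof (induction F rule: finite_induct)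
  case empty thus ?case by simp
next
  case (insert x F)
  have s1: "f x summable_on A" using insert by auto
  have ih: "(\<lambda>y. \<Sum>k\<in>F. f k y) summable_on A \<and> infsum (\<lambda>y. \<Sum>k\<in>F. f k y) A = (\<Sum>k\<in>F. infsum (f k) A)"
    using insert by auto
  have "(\<lambda>y. f x y + (\<Sum>k\<in>F. f k y)) summable_on A" using s1 ih by (intro summable_on_add) auto
  moreover have "infsum (\<lambda>y. f x y + (\<Sum>k\<in>F. f k y)) A = infsum (f x) A + infsum (\<lambda>y. \<Sum>k\<in>F. f k y) A"
    using s1 ih by (intro infsum_add) auto
  ultimately show ?case using insert ih by simp
qed

lemma CS_infsum:
  fixes x y :: "'a \<Rightarrow> real"
  assumes nn: "\<And>i. x i \<ge> 0" "\<And>i. y i \<ge> 0"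
    and sx: "(\<lambda>i. (x i)^2) summable_on UNIV" and sy: "(\<lambda>i. (y i)^2) summable_on UNIV"
  shows "(\<lambda>i. x i * y i) summable_on UNIV"
    "(infsum (\<lambda>i. x i * y i) UNIV)^2 \<le> infsum (\<lambda>i. (x i)^2) UNIV * infsum (\<lambda>i. (y i)^2) UNIV"
proof -
  define X where "X = infsum (\<lambda>i. (x i)^2) UNIV"
  define Y where "Y = infsum (\<lambda>i. (y i)^2) UNIV"
  have X0: "X \<ge> 0" "Y \<ge> 0" unfolding X_def Y_def by (auto intro!: infsum_nonneg)
  have fin: "(\<Sum>i\<in>F. x i * y i) \<le> sqrt (X * Y)" if F: "finite F" for F
  proof -
    have a: "(\<Sum>i\<in>F. (x i)^2) \<le> X" unfolding X_def by (rule finite_sum_le_infsum[OF sx F]) auto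
    have b: "(\<Sum>i\<in>F. (y i)^2) \<le> Y" unfolding Y_def by (rule finite_sum_le_infsum[OF sy F]) auto
    have "(\<Sum>i\<in>F. x i * y i)^2 \<le> (\<Sum>i\<in>F. (x i)^2) * (\<Sum>i\<in>F. (y i)^2)" by (rule Cauchy_Schwarz_ineq_sum)
    also have "\<dots> \<le> X * Y" using a b X0 by (intro mult_mono) (auto intro: sum_nonneg)
    finally have "(\<Sum>i\<in>F. x i * y i)^2 \<le> X * Y" .
    thus ?thesis by (metis real_le_rsqrt)
  qed
  have nxy: "\<And>i. x i * y i \<ge> 0" using nn by auto
  show s: "(\<lambda>i. x i * y i) summable_on UNIV" using bdd_summable(1)[OF nxy fin] by blast
  have le: "infsum (\<lambda>i. x i * y i) UNIV \<le> sqrt (X * Y)" using bdd_summable(2)[OF nxy fin] by blast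
  have ge: "infsum (\<lambda>i. x i * y i) UNIV \<ge> 0" using nxy by (intro infsum_nonneg) auto
  have "(infsum (\<lambda>i. x i * y i) UNIV)^2 \<le> (sqrt (X * Y))^2" using le ge by (intro power_mono) auto
  also have "\<dots> = X * Y" using X0 by simp
  finally show "(infsum (\<lambda>i. x i * y i) UNIV)^2 \<le> infsum (\<lambda>i. (x i)^2) UNIV * infsum (\<lambda>i. (y i)^2) UNIV"
    unfolding X_def Y_def .
qed

lemma g_bound:
  fixes s :: real and j :: int and z :: complex
  assumes "s \<ge> 0"
  shows "cmod z \<le> 2 powr (s/2) * sqrt ((1 + (of_int j)^2) powr s * (cmod z)^2) / Lw j powr s"
proof -
  define q where "q = 1 + (real_of_int j)^2"
  have q: "q \<ge> 1" unfolding q_def by simp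
  have "Lw j ^ 2 \<le> 2 * q"
  proof -
    define x where "x = real_of_int j"
    have e1: "Lw j ^ 2 = 1 + 2 * \<bar>x\<bar> + \<bar>x\<bar>^2" unfolding Lw_def x_def by (simp add: power2_eq_square algebra_simps)
    have e2: "2 * \<bar>x\<bar> \<le> x^2 + 1" using sum_squares_bound[of "\<bar>x\<bar>" 1] by simp
    have e3: "\<bar>x\<bar>^2 = x^2" by simp
    show ?thesis using e1 e2 e3 unfolding q_def x_def by (smt (verit))
  qed
  hence a: "(Lw j ^ 2) powr (s/2) \<le> (2 * q) powr (s/2)" using assms by (intro powr_mono2) (auto simp: Lw_def)
  have "Lw j ^ 2 = Lw j powr 2" using Lw_pos[of j] by (simp add: powr_numeral)
  hence b: "(Lw j ^ 2) powr (s/2) = Lw j powr s" by (simp add: powr_powr)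
  have c: "(2 * q) powr (s/2) = 2 powr (s/2) * q powr (s/2)" using q by (simp add: powr_mult)
  have "sqrt (q powr s) = (q powr s) powr (1/2)" by (simp add: powr_half_sqrt)
  also have "\<dots> = q powr (s/2)" by (simp add: powr_powr)
  finally have d0: "sqrt (q powr s) = q powr (s/2)" .
  have d: "sqrt (q powr s * (cmod z)^2) = q powr (s/2) * cmod z"
    by (simp only: real_sqrt_mult d0 real_sqrt_abs abs_norm_cancel)
  have "Lw j powr s * cmod z \<le> 2 powr (s/2) * q powr (s/2) * cmod z"
    using a b c by (intro mult_right_mono) auto
  also have "\<dots> = 2 powr (s/2) * sqrt (q powr s * (cmod z)^2)" using d by simp
  finally have e: "Lw j powr s * cmod z \<le> 2 powr (s/2) * sqrt (q powr s * (cmod z)^2)" .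
  have "cmod z = (Lw j powr s * cmod z) / Lw j powr s" using Lw_pos[of j] by simp
  also have "\<dots> \<le> 2 powr (s/2) * sqrt (q powr s * (cmod z)^2) / Lw j powr s"
    using e Lw_pos[of j] by (intro divide_right_mono) auto
  finally show ?thesis unfolding q_def .
qed


definition Tt :: "real \<Rightarrow> (int \<Rightarrow> complex) \<Rightarrow> int \<Rightarrow> int \<Rightarrow> complex" where
  "Tt \<tau> g k k1 = complex_of_real ((of_int k1)^2 / (of_int k)^2) *
         integral {0..\<tau>} (\<lambda>s::real.
            (exp (- 2 * \<i> * complex_of_real s * of_int ((k - k1)^2)) - 1) *
            (exp (- 2 * \<i> * complex_of_real s * of_int (k * k1)) - 1)) *
         g k1 * g (k - k1)"

lemma P1_Tt: "P1_coeff \<tau> g k = (if k = 0 then 0 else infsum (Tt \<tau> g k) UNIV)"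
  unfolding P1_coeff_def Tt_def by (rule refl)

lemma KL_nonneg: "KL r s k k1 \<ge> 0"
proof -
  have "Lw k1 powr s > 0" "Lw (k-k1) powr s > 0" "Lw k powr r > 0"
    using Lw_pos[of k1] Lw_pos[of "k-k1"] Lw_pos[of k] by (auto simp del: Lw_pos)
  thus ?thesis unfolding KL_def using Mf_nonneg[of k k1] by (intro divide_nonneg_pos mult_nonneg_nonneg) auto
qed

lemma Tt_bound:
  fixes g :: "int \<Rightarrow> complex"
  assumes "\<tau> > 0" "k \<noteq> 0" "s \<ge> 0"
  defines "b \<equiv> \<lambda>j. sqrt ((1 + (of_int j)^2) powr s * (cmod (g j))^2)"
  shows "Lw k powr r * cmod (Tt \<tau> g k k1) \<le> 4 * 2 powr s * \<tau>^2 * (KL r s k k1 * (b k1 * b (k-k1)))"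
proof -
  let ?I = "integral {0..\<tau>} (\<lambda>s::real.
            (exp (- 2 * \<i> * complex_of_real s * of_int ((k - k1)^2)) - 1) *
            (exp (- 2 * \<i> * complex_of_real s * of_int (k * k1)) - 1))"
  have I: "cmod ?I \<le> 4 * \<tau>^2 * min (real_of_int ((k-k1)^2)) \<bar>real_of_int (k*k1)\<bar>"
    using integral_bound[OF assms(1), of "real_of_int ((k-k1)^2)" "real_of_int (k*k1)"]
    by (simp only: of_real_of_int_eq) simp
  have q0: "(real_of_int k1)^2 / (real_of_int k)^2 \<ge> 0" by simp
  have m: "(real_of_int k1)^2 / (real_of_int k)^2 * cmod ?I \<le> 4 * \<tau>^2 * Mf k k1"
  proof -
    have "(real_of_int k1)^2 / (real_of_int k)^2 * cmod ?I \<le>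
        (real_of_int k1)^2 / (real_of_int k)^2 * (4 * \<tau>^2 * min (real_of_int ((k-k1)^2)) \<bar>real_of_int (k*k1)\<bar>)"
      by (intro mult_left_mono I q0)
    also have "\<dots> = 4 * \<tau>^2 * Mf k k1" by (simp add: Mf_def)
    finally show ?thesis .
  qed
  have g1: "cmod (g k1) \<le> 2 powr (s/2) * b k1 / Lw k1 powr s" unfolding b_def by (rule g_bound[OF assms(3)])
  have g2: "cmod (g (k-k1)) \<le> 2 powr (s/2) * b (k-k1) / Lw (k-k1) powr s" unfolding b_def by (rule g_bound[OF assms(3)])
  have n: "cmod (Tt \<tau> g k k1) = ((real_of_int k1)^2 / (real_of_int k)^2 * cmod ?I) * cmod (g k1) * cmod (g (k-k1))"
    by (simp only: Tt_def norm_mult norm_of_real abs_of_nonneg[OF q0])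
  have U1: "0 \<le> 2 powr (s/2) * b k1 / Lw k1 powr s" unfolding b_def by simp
  have M0: "0 \<le> 4 * \<tau>^2 * Mf k k1" using Mf_nonneg[of k k1] by simp
  have X0: "0 \<le> (real_of_int k1)^2 / (real_of_int k)^2 * cmod ?I" by simp
  have s1: "((real_of_int k1)^2 / (real_of_int k)^2 * cmod ?I) * cmod (g k1) \<le> (4 * \<tau>^2 * Mf k k1) * (2 powr (s/2) * b k1 / Lw k1 powr s)"
    by (rule mult_mono[OF m g1 M0]) simp
  have s2: "((real_of_int k1)^2 / (real_of_int k)^2 * cmod ?I) * cmod (g k1) * cmod (g (k-k1)) \<le>
     (4 * \<tau>^2 * Mf k k1) * (2 powr (s/2) * b k1 / Lw k1 powr s) * (2 powr (s/2) * b (k-k1) / Lw (k-k1) powr s)"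
    by (rule mult_mono[OF s1 g2]) (use M0 U1 X0 in \<open>auto intro!: mult_nonneg_nonneg simp del: times_divide_eq_right\<close>)
  have "Lw k powr r * cmod (Tt \<tau> g k k1) \<le> Lw k powr r * ((4 * \<tau>^2 * Mf k k1) * (2 powr (s/2) * b k1 / Lw k1 powr s) * (2 powr (s/2) * b (k-k1) / Lw (k-k1) powr s))"
    unfolding n by (rule mult_left_mono[OF s2]) simp
  also have "\<dots> = 4 * (2 powr (s/2) * 2 powr (s/2)) * \<tau>^2 * (KL r s k k1 * (b k1 * b (k-k1)))"
    unfolding KL_def by (simp add: field_simps)
  also have "2 powr (s/2) * 2 powr (s/2) = (2::real) powr s" by (simp add: powr_add[symmetric])
  finally show ?thesis .
qed


lemma weight_le: "(1 + (real_of_int k)^2) powr r \<le> (Lw k powr r)^2" if "r \<ge> 0"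
proof -
  have "1 + (real_of_int k)^2 \<le> (Lw k)^2" unfolding Lw_def by (simp add: power2_eq_square algebra_simps)
  hence "(1 + (real_of_int k)^2) powr r \<le> ((Lw k)^2) powr r" using that by (intro powr_mono2) auto
  also have "((Lw k)^2) powr r = (Lw k powr r)^2"
  proof -
    have e: "(Lw k)^2 = Lw k powr 2" using Lw_pos[of k] by (simp add: powr_numeral)
    have "((Lw k)^2) powr r = (Lw k powr 2) powr r" by (subst e) (rule refl)
    also have "\<dots> = Lw k powr (2*r)" by (rule powr_powr)
    also have "\<dots> = (Lw k powr r)^2" using Lw_pos[of k] by (rule powr_sq[symmetric])
    finally show ?thesis .
  qed
  finally show ?thesis .
qed

lemma main_est:
  assumes r: "1 \<le> r" "r \<le> s" "2 * r + 5 \<le> 4 * s" "s \<noteq> 5/2" "7/4 < s"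
  shows "\<exists>C. \<forall>g \<tau>. 0 < \<tau> \<longrightarrow> in_H s g \<longrightarrow>
           in_H r (P1_coeff \<tau> g) \<and> sob_norm r (P1_coeff \<tau> g) \<le> C * \<tau>^2 * sob_sq s g"
proof -
  obtain B where B: "\<And>k F. k \<noteq> 0 \<Longrightarrow> finite F \<Longrightarrow> (\<Sum>k1\<in>F. (KL r s k k1)^2) \<le> B"
    using Ksum[of r s] r by auto
  have B0: "B \<ge> 0" using B[of 1 "{}"] by simp
  have s0: "s \<ge> 0" "r \<ge> 0" using r by auto
  define c where "c = 4 * 2 powr s"
  have c0: "c \<ge> 0" unfolding c_def by simp
  show ?thesis
  proof (intro exI allI impI)
    fix g :: "int \<Rightarrow> complex" and \<tau> :: real
    assume \<tau>: "0 < \<tau>" and gH: "in_H s g"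
    define A where "A j = (1 + (of_int j)^2) powr s * (cmod (g j))^2" for j :: int
    define b where "b j = sqrt (A j)" for j
    define S where "S = infsum A UNIV"
    have As: "A summable_on UNIV" using gH unfolding in_H_def A_def by simp
    have A0: "\<And>j. A j \<ge> 0" by (simp add: A_def)
    have AS: "\<And>j. A j \<le> S" unfolding S_def using finite_sum_le_infsum[OF As, of "{_}"] A0 by auto
    have S0: "S \<ge> 0" using AS A0 order_trans by blast
    have b0: "\<And>j. b j \<ge> 0" unfolding b_def using A0 by simp
    have bsq: "\<And>j. (b j)^2 = A j" unfolding b_def using A0 by simp
    have sobS: "sob_sq s g = S" unfolding sob_sq_def S_def A_def by simp
    define A' where "A' k = infsum (\<lambda>k1. A k1 * A (k-k1)) UNIV" for k
    have A's: "(\<lambda>k1. A k1 * A (k-k1)) summable_on UNIV" for k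
    proof (rule summable_on_comparison_test)
      show "(\<lambda>k1. A k1 * S) summable_on UNIV" using As by (rule summable_on_cmult_left)
    qed (use A0 AS in \<open>auto intro: mult_left_mono\<close>)
    have A'0: "A' k \<ge> 0" for k unfolding A'_def using A0 by (intro infsum_nonneg) auto
    have pw: "(1 + (of_int k)^2) powr r * (cmod (P1_coeff \<tau> g k))^2 \<le> (c * \<tau>^2)^2 * B * A' k" for k
    proof (cases "k = 0")
      case True thus ?thesis using B0 A'0[of k] by (simp add: P1_Tt)
    next
      case k: False
      have KLs: "(\<lambda>k1. (KL r s k k1)^2) summable_on UNIV" "infsum (\<lambda>k1. (KL r s k k1)^2) UNIV \<le> B"
        using bdd_summable[of "\<lambda>k1. (KL r s k k1)^2" B] B[OF k] by auto
      have ysq: "(\<lambda>k1. (b k1 * b (k-k1))^2) = (\<lambda>k1. A k1 * A (k-k1))"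
        by (simp add: power_mult_distrib bsq)
      have CS1: "(\<lambda>k1. KL r s k k1 * (b k1 * b (k-k1))) summable_on UNIV"
        and CS2: "(infsum (\<lambda>k1. KL r s k k1 * (b k1 * b (k-k1))) UNIV)^2 \<le>
            infsum (\<lambda>k1. (KL r s k k1)^2) UNIV * infsum (\<lambda>k1. (b k1 * b (k-k1))^2) UNIV"
        using CS_infsum[of "KL r s k" "\<lambda>k1. b k1 * b (k-k1)"] KL_nonneg b0 KLs(1) A's[of k]
        unfolding ysq by auto
      define X where "X = infsum (\<lambda>k1. KL r s k k1 * (b k1 * b (k-k1))) UNIV"
      have X0: "X \<ge> 0" unfolding X_def using KL_nonneg b0 by (intro infsum_nonneg mult_nonneg_nonneg) auto
      have X2: "X^2 \<le> B * A' k"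
      proof -
        have "X^2 \<le> infsum (\<lambda>k1. (KL r s k k1)^2) UNIV * A' k" using CS2 unfolding X_def A'_def ysq .
        also have "\<dots> \<le> B * A' k" using KLs(2) A'0[of k] by (intro mult_right_mono) auto
        finally show ?thesis .
      qed
      have Lp: "Lw k powr r > 0" using Lw_pos[of k] by (auto simp del: Lw_pos)
      have Tb: "cmod (Tt \<tau> g k k1) \<le> (c * \<tau>^2 / Lw k powr r) * (KL r s k k1 * (b k1 * b (k-k1)))" for k1
      proof -
        have "Lw k powr r * cmod (Tt \<tau> g k k1) \<le> c * \<tau>^2 * (KL r s k k1 * (b k1 * b (k-k1)))"
          using Tt_bound[OF \<tau> k s0(1), of r g k1] unfolding c_def b_def A_def by simp
        thus ?thesis using Lp by (simp add: field_simps)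
      qed
      have Tns: "(\<lambda>k1. norm (Tt \<tau> g k k1)) summable_on UNIV"
      proof (rule summable_on_comparison_test)
        show "(\<lambda>k1. (c * \<tau>^2 / Lw k powr r) * (KL r s k k1 * (b k1 * b (k-k1)))) summable_on UNIV"
          using CS1 by (rule summable_on_cmult_right)
      qed (use Tb in auto)
      have "cmod (P1_coeff \<tau> g k) \<le> infsum (\<lambda>k1. norm (Tt \<tau> g k k1)) UNIV"
        using k norm_infsum_bound[OF Tns] by (simp add: P1_Tt)
      also have "\<dots> \<le> infsum (\<lambda>k1. (c * \<tau>^2 / Lw k powr r) * (KL r s k k1 * (b k1 * b (k-k1)))) UNIV"
        by (rule infsum_mono[OF Tns summable_on_cmult_right[OF CS1]]) (rule Tb)
      also have "\<dots> = (c * \<tau>^2 / Lw k powr r) * X" unfolding X_def by (rule infsum_cmult_right) (use CS1 in auto)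
      finally have Pb: "Lw k powr r * cmod (P1_coeff \<tau> g k) \<le> c * \<tau>^2 * X" using Lp by (simp add: field_simps)
      have "(1 + (of_int k)^2) powr r * (cmod (P1_coeff \<tau> g k))^2 \<le> (Lw k powr r)^2 * (cmod (P1_coeff \<tau> g k))^2"
        using weight_le[OF s0(2), of k] by (intro mult_right_mono) auto
      also have "\<dots> = (Lw k powr r * cmod (P1_coeff \<tau> g k))^2" by (simp add: power_mult_distrib)
      also have "\<dots> \<le> (c * \<tau>^2 * X)^2" using Pb Lp by (intro power_mono) auto
      also have "\<dots> = (c * \<tau>^2)^2 * X^2" by (simp add: power_mult_distrib)
      also have "\<dots> \<le> (c * \<tau>^2)^2 * (B * A' k)" using X2 by (intro mult_left_mono) auto
      finally show ?thesis by (simp add: mult.assoc)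
    qed
    have A'fin: "(\<Sum>k\<in>F. A' k) \<le> S * S" if F: "finite F" for F
    proof -
      have fs: "(\<lambda>k1. \<Sum>k\<in>F. A k1 * A (k-k1)) summable_on UNIV \<and>
          infsum (\<lambda>k1. \<Sum>k\<in>F. A k1 * A (k-k1)) UNIV = (\<Sum>k\<in>F. infsum (\<lambda>k1. A k1 * A (k-k1)) UNIV)"
        using infsum_finsum[OF F, of "\<lambda>k k1. A k1 * A (k-k1)" UNIV] A's by auto
      have inner: "(\<Sum>k\<in>F. A k1 * A (k-k1)) \<le> A k1 * S" for k1
      proof -
        have "(\<Sum>k\<in>F. A (k-k1)) = (\<Sum>j\<in>(\<lambda>k. k-k1) ` F. A j)"
          by (subst sum.reindex) (auto simp: inj_on_def)
        also have "\<dots> \<le> S" unfolding S_def using F A0 by (intro finite_sum_le_infsum[OF As]) auto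
        finally show ?thesis using A0[of k1] by (simp add: sum_distrib_left[symmetric] mult_left_mono)
      qed
      have "(\<Sum>k\<in>F. A' k) = infsum (\<lambda>k1. \<Sum>k\<in>F. A k1 * A (k-k1)) UNIV" using fs unfolding A'_def by simp
      also have "\<dots> \<le> infsum (\<lambda>k1. A k1 * S) UNIV"
        using fs summable_on_cmult_left[OF As] inner by (intro infsum_mono) auto
      also have "\<dots> = S * S" unfolding S_def by (rule infsum_cmult_left) (use As in auto)
      finally show ?thesis .
    qed
    have A'sum: "A' summable_on UNIV" "infsum A' UNIV \<le> S * S"
      using bdd_summable[of A' "S * S"] A'0 A'fin by auto
    have dom: "(\<lambda>k. (c * \<tau>^2)^2 * B * A' k) summable_on UNIV"
      using A'sum(1) by (rule summable_on_cmult_right)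
    have Hs: "(\<lambda>k. (1 + (of_int k)^2) powr r * (cmod (P1_coeff \<tau> g k))^2) summable_on UNIV"
      by (rule summable_on_comparison_test[OF dom]) (use pw in auto)
    show "in_H r (P1_coeff \<tau> g) \<and> sob_norm r (P1_coeff \<tau> g) \<le> (c * sqrt B) * \<tau>^2 * sob_sq s g"
    proof
      show "in_H r (P1_coeff \<tau> g)" unfolding in_H_def using Hs by simp
      have "sob_sq r (P1_coeff \<tau> g) \<le> infsum (\<lambda>k. (c * \<tau>^2)^2 * B * A' k) UNIV"
        unfolding sob_sq_def by (rule infsum_mono[OF Hs dom]) (use pw in auto)
      also have "\<dots> = (c * \<tau>^2)^2 * B * infsum A' UNIV" by (rule infsum_cmult_right) (use A'sum in auto)
      also have "\<dots> \<le> (c * \<tau>^2)^2 * B * (S * S)" using A'sum(2) B0 by (intro mult_left_mono) auto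
      also have "\<dots> = (c * sqrt B * \<tau>^2 * S)^2" using B0 by (simp add: power_mult_distrib power2_eq_square)
      finally have "sob_norm r (P1_coeff \<tau> g) \<le> sqrt ((c * sqrt B * \<tau>^2 * S)^2)"
        unfolding sob_norm_def by (rule real_sqrt_le_mono)
      also have "\<dots> = c * sqrt B * \<tau>^2 * S" using c0 B0 S0 by simp
      finally show "sob_norm r (P1_coeff \<tau> g) \<le> (c * sqrt B) * \<tau>^2 * sob_sq s g" using sobS by simp
    qed
  qed
qed


lemma fourier_cnj: "fourier_coeff (\<lambda>x. cnj (f x)) k = cnj (fourier_coeff f (-k))"
proof -
  have e: "indicator {-pi..pi} x *\<^sub>R (cnj (f x) * exp (- \<i> * of_int k * complex_of_real x))
      = cnj (indicator {-pi..pi} x *\<^sub>R (f x * exp (- \<i> * of_int (-k) * complex_of_real x)))" for x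
    by (simp add: exp_cnj)
  have i: "(LINT x|lborel. indicator {-pi..pi} x *\<^sub>R (cnj (f x) * exp (- \<i> * of_int k * complex_of_real x)))
     = cnj (LINT x|lborel. indicator {-pi..pi} x *\<^sub>R (f x * exp (- \<i> * of_int (-k) * complex_of_real x)))"
    by (simp only: e Bochner_Integration.integral_cnj)
  show ?thesis
    unfolding fourier_coeff_def set_lebesgue_integral_def using i by simp
qed

lemma reindex_neg:
  fixes h :: "int \<Rightarrow> real"
  shows "(\<lambda>k. h (-k)) summable_on UNIV \<longleftrightarrow> h summable_on UNIV"
    and "infsum (\<lambda>k. h (-k)) UNIV = infsum h UNIV"
proof -
  have i: "inj_on uminus (UNIV :: int set)" by (simp add: inj_on_def)
  have u: "uminus ` (UNIV :: int set) = UNIV" by (simp add: surj_def)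
  show "(\<lambda>k. h (-k)) summable_on UNIV \<longleftrightarrow> h summable_on UNIV"
    using summable_on_reindex[OF i, of h] u by (simp add: o_def)
  show "infsum (\<lambda>k. h (-k)) UNIV = infsum h UNIV"
    using infsum_reindex[OF i, of h] u by (simp add: o_def)
qed

lemma sob_cnj:
  "in_H s (fourier_coeff (\<lambda>x. cnj (f x))) \<longleftrightarrow> in_H s (fourier_coeff f)"
  "sob_sq s (fourier_coeff (\<lambda>x. cnj (f x))) = sob_sq s (fourier_coeff f)"
proof -
  define h where "h = (\<lambda>k::int. (1 + (of_int k)^2) powr s * (cmod (fourier_coeff f k))^2)"
  have e: "(\<lambda>k. (1 + (of_int k)^2) powr s * (cmod (fourier_coeff (\<lambda>x. cnj (f x)) k))^2) = (\<lambda>k. h (-k))"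
    by (simp add: fourier_cnj h_def)
  have "in_H s (fourier_coeff (\<lambda>x. cnj (f x))) \<longleftrightarrow> (\<lambda>k. h (-k)) summable_on UNIV" unfolding in_H_def e ..
  also have "\<dots> \<longleftrightarrow> h summable_on UNIV" by (rule reindex_neg(1))
  also have "\<dots> \<longleftrightarrow> in_H s (fourier_coeff f)" unfolding in_H_def h_def ..
  finally show "in_H s (fourier_coeff (\<lambda>x. cnj (f x))) \<longleftrightarrow> in_H s (fourier_coeff f)" .
  have "sob_sq s (fourier_coeff (\<lambda>x. cnj (f x))) = infsum (\<lambda>k. h (-k)) UNIV" unfolding sob_sq_def e ..
  also have "\<dots> = infsum h UNIV" by (rule reindex_neg(2))
  also have "\<dots> = sob_sq s (fourier_coeff f)" unfolding sob_sq_def h_def ..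
  finally show "sob_sq s (fourier_coeff (\<lambda>x. cnj (f x))) = sob_sq s (fourier_coeff f)" .
qed

lemma suff:
  assumes "1 \<le> r" "r \<le> s" "2 * r + 5 \<le> 4 * s" "s \<noteq> 5/2" "7/4 < s"
  shows "P1_estimate r s"
proof -
  obtain C where C: "\<And>g \<tau>. 0 < \<tau> \<Longrightarrow> in_H s g \<Longrightarrow>
           in_H r (P1_coeff \<tau> g) \<and> sob_norm r (P1_coeff \<tau> g) \<le> C * \<tau>^2 * sob_sq s g"
    using main_est[OF assms] by blast
  show ?thesis unfolding P1_estimate_def
  proof (intro exI allI impI)
    fix f :: "real \<Rightarrow> complex" and \<tau> :: real
    assume h: "set_integrable lborel {-pi..pi} f \<and> in_H s (fourier_coeff f) \<and> 0 < \<tau>"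
    have g: "in_H s (fourier_coeff (\<lambda>x. cnj (f x)))" using h sob_cnj(1) by blast
    have sq: "sob_sq s (fourier_coeff f) = (sob_norm s (fourier_coeff f))^2"
    proof -
      have "sob_sq s (fourier_coeff f) \<ge> 0" unfolding sob_sq_def by (intro infsum_nonneg) auto
      thus ?thesis unfolding sob_norm_def by simp
    qed
    show "in_H r (P1_coeff \<tau> (fourier_coeff (\<lambda>x. cnj (f x)))) \<and>
         sob_norm r (P1_coeff \<tau> (fourier_coeff (\<lambda>x. cnj (f x)))) \<le> C * \<tau>^2 * (sob_norm s (fourier_coeff f))^2"
      using C[OF _ g] h sob_cnj(2)[of s f] sq by auto
  qed
qed


theorem lemma6:
  fixes r :: real
  assumes "1 \<le> r"
  shows "if p_plus r
         then (\<exists>\<epsilon>0>0. \<forall>\<epsilon>. 0 < \<epsilon> \<and> \<epsilon> < \<epsilon>0 \<longrightarrow> P1_estimate r (r + p_base r + \<epsilon>))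
         else P1_estimate r (r + p_base r)"
proof (cases "p_plus r")
  case True
  have "\<forall>\<epsilon>. 0 < \<epsilon> \<and> \<epsilon> < 1/12 \<longrightarrow> P1_estimate r (r + p_base r + \<epsilon>)"
  proof (intro allI impI)
    fix \<epsilon> :: real assume e: "0 < \<epsilon> \<and> \<epsilon> < 1/12"
    consider (a) "1 < r" "r \<le> 7/6" | (b) "17/12 < r" "r \<le> 3/2" | (c) "r = 5/2"
      using True unfolding p_plus_def by blast
    then show "P1_estimate r (r + p_base r + \<epsilon>)"
    proof cases
      case a
      hence p: "p_base r = 3 - 2 * r" by (simp add: p_base_def)
      show ?thesis unfolding p by (rule suff) (use a e in auto)
    next
      case b
      hence p: "p_base r = 7/2 - 2 * r" by (simp add: p_base_def)
      show ?thesis unfolding p by (rule suff) (use b e in auto)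
    next
      case c
      hence p: "p_base r = 0" by (simp add: p_base_def)
      show ?thesis unfolding p by (rule suff) (use c e in auto)
    qed
  qed
  hence "\<exists>\<epsilon>0>0. \<forall>\<epsilon>. 0 < \<epsilon> \<and> \<epsilon> < \<epsilon>0 \<longrightarrow> P1_estimate r (r + p_base r + \<epsilon>)"
    by (intro exI[of _ "1/12"]) auto
  thus ?thesis using True by simp
next
  case False
  consider (a) "r = 1" | (b) "7/6 < r" "r \<le> 17/12" | (c) "3/2 < r" "r < 5/2" | (d) "5/2 < r"
    using False assms unfolding p_plus_def by argo
  then have "P1_estimate r (r + p_base r)"
  proof cases
    case a
    hence p: "p_base r = 1" by (simp add: p_base_def)
    show ?thesis unfolding p by (rule suff) (use a in auto)
  next
    case b
    hence p: "p_base r = 2/3" by (simp add: p_base_def)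
    show ?thesis unfolding p by (rule suff) (use b in auto)
  next
    case c
    hence p: "p_base r = 5/4 - r/2" by (simp add: p_base_def)
    show ?thesis unfolding p by (rule suff) (use c in auto)
  next
    case d
    hence p: "p_base r = 0" by (simp add: p_base_def)
    show ?thesis unfolding p by (rule suff) (use d in auto)
  qed
  thus ?thesis using False by simp
qed


end
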